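(* Let $p > 0$, let $X$ be a random variable on a probability space with $X \ge 0$ almost surely and $X \in L^p$ (i.e. $E X^p < \infty$), and let $0 < r < s \le p/2$. Then $$\operatorname{Var}(X^r)^{1/r} \le \operatorname{Var}(X^s)^{1/s}.$$
   Context: $\operatorname{Var}(Y) = E(Y^2) - (EY)^2$ denotes the variance of a square-integrable random variable $Y$. Statements such as $X\ge 0$ are meant almost surely. *)

theory Defs
  imports "HOL-Probability.Probability"
begin

end

theory Submission
  imports Defs
begin
lemma tangent_powr:
  fixes t m w :: real
  assumes t: "t \<ge> 1" and m: "m > 0" and w: "w \<ge> 0"
  shows "m powr t + t * m powr (t - 1) * (w - m) \<le> w powr t"
proof (cases "w = 0")
  case True
  have "m powr t = m powr ((t-1)+1)" by simp
  also have "\<dots> = m powr (t-1) * m" using m by (subst powr_add) simp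
  finally have "m powr t = m powr (t-1) * m" .
  then show ?thesis using True t m
    by (simp add: algebra_simps)
next
  case False
  then have wp: "w > 0" using w by simp
  have cv: "convex_on {0<..} (\<lambda>x. x powr t)" using powr_convex t by blast
  have d: "((\<lambda>x. x powr t) has_field_derivative t * m powr (t - 1)) (at m within {0<..})"
    using m by (auto intro!: derivative_eq_intros)
  have "t * m powr (t - 1) * (w - m) \<le> w powr t - m powr t"
    by (rule convex_on_imp_above_tangent[OF cv _ _ _ d]) (use m wp in \<open>auto simp: interior_open\<close>)
  then show ?thesis by simp
qed

lemma superadd_powr:
  fixes a b t :: real
  assumes "a \<ge> 0" "b \<ge> 0" "t \<ge> 1"
  shows "a powr t + b powr t \<le> (a + b) powr t"
proof (cases "a + b = 0")
  case True then have "a = 0" "b = 0" using assms by auto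
  then show ?thesis by simp
next
  case False
  then have s: "a + b > 0" using assms by simp
  have ha: "(a/(a+b)) powr t \<le> a/(a+b)"
  proof -
    have "(a/(a+b)) powr t \<le> (a/(a+b)) powr 1"
      by (rule powr_mono') (use assms s in auto)
    then show ?thesis using assms s by simp
  qed
  have hb: "(b/(a+b)) powr t \<le> b/(a+b)"
  proof -
    have "(b/(a+b)) powr t \<le> (b/(a+b)) powr 1"
      by (rule powr_mono') (use assms s in auto)
    then show ?thesis using assms s by simp
  qed
  have "(a/(a+b)) powr t + (b/(a+b)) powr t \<le> 1"
  proof -
    have "a/(a+b) + b/(a+b) = 1" using s by (simp add: add_divide_distrib[symmetric])
    then show ?thesis using ha hb by linarith
  qed
  then have "(a powr t + b powr t) / (a+b) powr t \<le> 1"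
    using assms s by (simp add: powr_divide add_divide_distrib)
  then show ?thesis using s by simp
qed

lemma abs_diff_powr:
  fixes u c t :: real
  assumes "u \<ge> 0" "c \<ge> 0" "t \<ge> 1"
  shows "\<bar>u - c\<bar> powr t \<le> \<bar>u powr t - c powr t\<bar>"
proof (cases "c \<le> u")
  case True
  have "c powr t + (u - c) powr t \<le> (c + (u - c)) powr t"
    by (rule superadd_powr) (use assms True in auto)
  then show ?thesis using True by simp
next
  case False
  have "u powr t + (c - u) powr t \<le> (u + (c - u)) powr t"
    by (rule superadd_powr) (use assms False in auto)
  then show ?thesis using False by simp
qed

context prob_space
begin

lemma moment_jensen:
  fixes W :: "'a \<Rightarrow> real" and t :: real
  assumes t: "t \<ge> 1" and Wm: "W \<in> borel_measurable M" and W0: "AE x in M. W x \<ge> 0"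
    and iW: "integrable M W" and iWt: "integrable M (\<lambda>x. W x powr t)"
  shows "expectation W powr t \<le> expectation (\<lambda>x. W x powr t)"
proof -
  define m where "m = expectation W"
  have m0: "m \<ge> 0" unfolding m_def using W0 by (rule integral_nonneg_AE)
  show ?thesis
  proof (cases "m = 0")
    case True
    then show ?thesis unfolding m_def[symmetric] by (simp add: integral_nonneg_AE)
  next
    case False
    with m0 have mp: "m > 0" by simp
    have "expectation (\<lambda>x. m powr t + t * m powr (t - 1) * (W x - m))
          \<le> expectation (\<lambda>x. W x powr t)"
      by (rule integral_mono_AE) (use iW iWt W0 in \<open>auto intro!: tangent_powr[OF t mp]\<close>)
    moreover have "expectation (\<lambda>x. m powr t + t * m powr (t - 1) * (W x - m)) = m powr t"
      using iW prob_space by (simp add: m_def)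
    ultimately show ?thesis unfolding m_def by simp
  qed
qed

lemma var_le_sq_dev:
  fixes U :: "'a \<Rightarrow> real"
  assumes iU2: "integrable M (\<lambda>x. (U x)\<^sup>2)" and Um: "U \<in> borel_measurable M"
  shows "variance U \<le> expectation (\<lambda>x. (U x - c)\<^sup>2)"
proof -
  have iU: "integrable M U" using square_integrable_imp_integrable[OF Um iU2] .
  have "expectation (\<lambda>x. (U x - c)\<^sup>2) = expectation (\<lambda>x. (U x)\<^sup>2) - 2 * c * expectation U + c\<^sup>2"
    using iU iU2 prob_space by (simp add: power2_diff)
  moreover have "variance U = expectation (\<lambda>x. (U x)\<^sup>2) - (expectation U)\<^sup>2"
    by (rule variance_eq[OF iU iU2])
  moreover have "0 \<le> (expectation U - c)\<^sup>2" by simp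
  moreover have "(expectation U - c)\<^sup>2 = (expectation U)\<^sup>2 - 2 * c * expectation U + c\<^sup>2"
    by (simp add: power2_diff)
  ultimately show ?thesis by linarith
qed


lemma sq_powr: fixes a t :: real shows "(a\<^sup>2) powr t = (\<bar>a\<bar> powr t)\<^sup>2"
proof (cases "a = 0")
  case True then show ?thesis by simp
next
  case False
  have "a\<^sup>2 = \<bar>a\<bar> powr 2" by (simp only: powr_numeral abs_ge_zero power2_abs)
  then have "(a\<^sup>2) powr t = \<bar>a\<bar> powr (2 * t)" by (simp only: powr_powr)
  also have "\<dots> = \<bar>a\<bar> powr (t + t)" by (simp only: mult_2)
  also have "\<dots> = (\<bar>a\<bar> powr t)\<^sup>2" by (simp only: powr_add power2_eq_square)
  finally show ?thesis .
qed

lemma var_powr: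
  fixes U :: "'a \<Rightarrow> real" and t :: real
  assumes t: "t \<ge> 1" and Um: "U \<in> borel_measurable M" and U0: "AE x in M. U x \<ge> 0"
    and iU2: "integrable M (\<lambda>x. (U x)\<^sup>2)" and iUt2: "integrable M (\<lambda>x. (U x powr t)\<^sup>2)"
  shows "variance U powr t \<le> variance (\<lambda>x. U x powr t)"
proof -
  define m where "m = expectation (\<lambda>x. U x powr t)"
  have m0: "m \<ge> 0" unfolding m_def by (simp add: integral_nonneg_AE)
  define c where "c = m powr (1/t)"
  have c0: "c \<ge> 0" unfolding c_def by simp
  have cm: "c powr t = m" unfolding c_def using t m0 by (simp add: powr_powr)
  have Utm: "(\<lambda>x. U x powr t) \<in> borel_measurable M" using Um by measurable
  have iU: "integrable M U" using square_integrable_imp_integrable[OF Um iU2] .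
  have iUt: "integrable M (\<lambda>x. U x powr t)" using square_integrable_imp_integrable[OF Utm iUt2] .
  define W where "W = (\<lambda>x. (U x - c)\<^sup>2)"
  have Wm: "W \<in> borel_measurable M" unfolding W_def using Um by measurable
  have iW: "integrable M W" unfolding W_def power2_diff using iU iU2 by simp
  have iD: "integrable M (\<lambda>x. (U x powr t - m)\<^sup>2)" unfolding power2_diff using iUt iUt2 by simp
  have bnd: "AE x in M. W x powr t \<le> (U x powr t - m)\<^sup>2"
    using U0
  proof eventually_elim
    case (elim x)
    have "\<bar>U x - c\<bar> powr t \<le> \<bar>U x powr t - c powr t\<bar>"
      by (rule abs_diff_powr) (use elim c0 t in auto)
    then have "(\<bar>U x - c\<bar> powr t)\<^sup>2 \<le> (\<bar>U x powr t - c powr t\<bar>)\<^sup>2"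
      by (rule power_mono) simp
    then show ?case unfolding W_def sq_powr cm by simp
  qed
  have iWt: "integrable M (\<lambda>x. W x powr t)"
    by (rule Bochner_Integration.integrable_bound[OF iD]) (use Wm bnd in auto)
  have "variance U powr t \<le> expectation W powr t"
    by (rule powr_mono2) (use t var_le_sq_dev[OF iU2 Um, of c] in \<open>auto simp: W_def\<close>)
  also have "\<dots> \<le> expectation (\<lambda>x. W x powr t)"
    by (rule moment_jensen[OF t Wm _ iW iWt]) (simp add: W_def)
  also have "\<dots> \<le> expectation (\<lambda>x. (U x powr t - m)\<^sup>2)"
    by (rule integral_mono_AE[OF iWt iD bnd])
  finally show ?thesis unfolding m_def .
qed

end

lemma (in prob_space) integrable_powr_le:
  fixes X :: "'a \<Rightarrow> real"
  assumes Xm: "X \<in> borel_measurable M" and X0: "AE x in M. X x \<ge> 0"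
    and iXp: "integrable M (\<lambda>x. X x powr p)" and q: "0 < q" "q \<le> p"
  shows "integrable M (\<lambda>x. X x powr q)"
proof (rule Bochner_Integration.integrable_bound[of _ "\<lambda>x. 1 + X x powr p"])
  show "integrable M (\<lambda>x. 1 + X x powr p)" using iXp by simp
  show "(\<lambda>x. X x powr q) \<in> borel_measurable M" using Xm by measurable
  show "AE x in M. norm (X x powr q) \<le> norm (1 + X x powr p)"
    using X0
  proof eventually_elim
    case (elim x)
    have "X x powr q \<le> 1 + X x powr p"
    proof (cases "X x \<le> 1")
      case True
      then have "X x powr q \<le> 1" using elim q by (intro powr_le1) auto
      then show ?thesis by (smt (verit) powr_ge_zero)
    next
      case False
      then have "X x powr q \<le> X x powr p" using q by (intro powr_mono) auto
      then show ?thesis by simp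
    qed
    then show ?case by simp
  qed
qed

theorem corollary2p3:
  fixes M :: "'a measure" and X :: "'a \<Rightarrow> real" and p r s :: real
  assumes "prob_space M"
    and "X \<in> borel_measurable M"
    and "AE x in M. X x \<ge> 0"
    and "p > 0"
    and "integrable M (\<lambda>x. X x powr p)"
    and "0 < r" and "r < s" and "s \<le> p / 2"
  shows "prob_space.variance M (\<lambda>x. X x powr r) powr (1 / r)
           \<le> prob_space.variance M (\<lambda>x. X x powr s) powr (1 / s)"
proof -
  interpret prob_space M by fact
  note Xm = assms(2) and X0 = assms(3) and iXp = assms(5) and r = assms(6) and rs = assms(7) and sp = assms(8)
  define t where "t = s / r"
  have t1: "t \<ge> 1" unfolding t_def using r rs by simp
  have rt: "r * t = s" unfolding t_def using r by simp
  define U where "U = (\<lambda>x. X x powr r)"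
  have Um: "U \<in> borel_measurable M" unfolding U_def using Xm by measurable
  have U0: "AE x in M. U x \<ge> 0" unfolding U_def by simp
  have i2r: "integrable M (\<lambda>x. X x powr (2 * r))"
    by (rule integrable_powr_le[OF Xm X0 iXp]) (use r rs sp in auto)
  have i2s: "integrable M (\<lambda>x. X x powr (2 * s))"
    by (rule integrable_powr_le[OF Xm X0 iXp]) (use r rs sp in auto)
  have sqp: "(y powr a)\<^sup>2 = y powr (2 * a)" if "y \<ge> 0" for y a :: real
    using that by (simp add: power2_eq_square powr_add[symmetric])
  have iU2: "integrable M (\<lambda>x. (U x)\<^sup>2)"
  proof (subst integrable_cong_AE)
    show "(\<lambda>x. (U x)\<^sup>2) \<in> borel_measurable M" using Um by measurable
    show "(\<lambda>x. X x powr (2 * r)) \<in> borel_measurable M" using Xm by measurable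
    show "AE x in M. (U x)\<^sup>2 = X x powr (2 * r)" using X0 by eventually_elim (simp add: U_def sqp)
  qed (rule i2r)
  have Ut: "U x powr t = X x powr s" for x unfolding U_def by (simp add: powr_powr rt)
  have iUt2: "integrable M (\<lambda>x. (U x powr t)\<^sup>2)"
  proof (subst integrable_cong_AE)
    show "(\<lambda>x. (U x powr t)\<^sup>2) \<in> borel_measurable M" using Um by measurable
    show "(\<lambda>x. X x powr (2 * s)) \<in> borel_measurable M" using Xm by measurable
    show "AE x in M. (U x powr t)\<^sup>2 = X x powr (2 * s)" using X0 
      by eventually_elim (simp add: U_def sqp powr_powr rt)
  qed (rule i2s)
  have key: "variance U powr t \<le> variance (\<lambda>x. X x powr s)"
    using var_powr[OF t1 Um U0 iU2 iUt2] by (simp only: Ut)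
  have "variance U powr (1 / r) = (variance U powr t) powr (1 / s)"
    using r rs by (simp add: powr_powr t_def)
  also have "\<dots> \<le> variance (\<lambda>x. X x powr s) powr (1 / s)"
    by (rule powr_mono2) (use key r rs in auto)
  finally show ?thesis unfolding U_def .
qed

end
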